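(* Let $S \subset \mathbb{Z}$ be a finite set, $n \ge 0$, $P \in \mathcal{P}_{2n}(S)$, $u \ge 0$ an integer, and let $R$ be a polynomial of degree at most $u$ with complex coefficients, $R \not\equiv 0$. Suppose $\mathrm{NC}(PR) \le \nu$. Let $v := \lfloor 16u\log\log(u+3)\rfloor$, $k := d_v$, and $H(z) := z^k - 1$. Then $$\mathrm{NC}(PH) \le (\nu+1)\big(k + |S|^{u+1} + 3(u+1) + 2\big),$$ where $|S|$ is the number of elements of $S$.
   Context: For $S \subset \mathbb{C}$ and $N\ge0$, $\mathcal{P}_N(S)$ denotes the set of polynomials $P(z)=\sum_{j=0}^N a_j z^j$ with every $a_j \in S$. For a polynomial $F(z)=\sum_j c_j z^j$, $\mathrm{NC}(F)$ is the number of indices $j$ with $c_j\ne0$. $d_v := \mathrm{LCM}(1,2,\dots,v)$ for $v\ge1$, and $d_0 := 1$. *)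

theory Defs
  imports Complex_Main "HOL-Computational_Algebra.Polynomial"
begin

definition polys_coeffs_in :: "nat \<Rightarrow> 'a::zero set \<Rightarrow> 'a poly set" where
  "polys_coeffs_in N S = {P. degree P \<le> N \<and> (\<forall>j\<le>N. coeff P j \<in> S)}"

definition NC :: "'a::zero poly \<Rightarrow> nat" where
  "NC F = card {j. coeff F j \<noteq> 0}"

text \<open>d_v = LCM(1,...,v), d_0 = 1.\<close>
definition dlcm :: "nat \<Rightarrow> nat" where
  "dlcm v = Lcm {1..v}"

end

theory Submission
  imports Defs "HOL-Number_Theory.Totient" "HOL-Analysis.Complex_Transcendental"
begin

lemma binom_prime:
  fixes x y :: "'a::comm_ring_1"
  assumes "prime p"
  shows "\<exists>M. (x + y) ^ p = x ^ p + y ^ p + of_nat p * M"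
proof -
  have p0: "p > 1" using assms prime_gt_1_nat by blast
  then obtain q where pq: "p = Suc (Suc q)" by (metis less_imp_Suc_add plus_1_eq_Suc add_Suc_right)
  define f where "f k = of_nat (p choose k) * x ^ k * y ^ (p - k)" for k
  define g where "g k = of_nat ((p choose k) div p) * x ^ k * y ^ (p - k)" for k
  have "(x + y) ^ p = (\<Sum>k\<le>p. f k)"
    unfolding f_def by (rule binomial_ring)
  also have "\<dots> = f 0 + ((\<Sum>k\<le>q. f (Suc k)) + f (Suc (Suc q)))"
    unfolding pq sum.atMost_Suc_shift[of f] sum.atMost_Suc[of "\<lambda>k. f (Suc k)"] by simp
  also have "(\<Sum>k\<le>q. f (Suc k)) = of_nat p * (\<Sum>k\<le>q. g (Suc k))"
  proof -
    have "f (Suc k) = of_nat p * g (Suc k)" if "k \<le> q" for k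
    proof -
      have "p dvd (p choose Suc k)"
        by (rule dvd_choose_prime) (use assms pq that in simp_all)
      then obtain d where d: "p choose Suc k = p * d" by blast
      have "d = (p choose Suc k) div p" using d p0 by simp
      then show ?thesis unfolding f_def g_def d by (simp add: mult.assoc)
    qed
    then show ?thesis by (simp add: sum_distrib_left)
  qed
  finally have e: "(x + y) ^ p = f 0 + (of_nat p * (\<Sum>k\<le>q. g (Suc k)) + f (Suc (Suc q)))" .
  have f0: "f 0 = y ^ p" and fp: "f (Suc (Suc q)) = x ^ p" unfolding f_def pq by simp_all
  have "(x + y) ^ p = x ^ p + y ^ p + of_nat p * (\<Sum>k\<le>q. g (Suc k))"
    using e unfolding f0 fp by (simp add: add_ac)
  then show ?thesis by blast
qed

lemma fermat_int:
  fixes a :: int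
  assumes "prime p"
  shows "int p dvd a ^ p - a"
proof -
  have p0: "p > 1" using assms prime_gt_1_nat by blast
  have nat_case: "int p dvd int n ^ p - int n" for n
  proof (induction n)
    case 0 then show ?case using p0 by (simp add: power_0_left)
  next
    case (Suc n)
    obtain M where M: "(int n + 1) ^ p = int n ^ p + 1 ^ p + of_nat p * M"
      using binom_prime[OF assms] by blast
    have e: "int (Suc n) ^ p - int (Suc n) = (int n ^ p - int n) + int p * M"
      using M by (simp add: ac_simps)
    show ?case unfolding e by (rule dvd_add[OF Suc.IH]) simp
  qed
  show ?thesis
  proof (cases "a \<ge> 0")
    case True then show ?thesis using nat_case[of "nat a"] by simp
  next
    case False
    obtain M where M: "(1 + (-1::int)) ^ p = 1 ^ p + (-1) ^ p + of_nat p * M"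
      using binom_prime[OF assms] by blast
    have "(-1::int)^p - (-1) = int p * (-M)" using M p0 by (simp add: power_0_left)
    then have m1: "int p dvd (-1) ^ p - (-1::int)" by (metis dvd_triv_left)
    define n where "n = nat (-a)"
    have n: "a = - int n" using False n_def by simp
    have "a ^ p - a = (-1) ^ p * (int n ^ p - int n) + int n * ((-1) ^ p - (-1))"
      unfolding n power_minus[of "int n"] by (simp add: right_diff_distrib distrib_left)
    then show ?thesis by (simp only:) (intro dvd_add dvd_mult nat_case m1)
  qed
qed

definition ev :: "int poly \<Rightarrow> complex \<Rightarrow> complex" where
  "ev p z = poly (map_poly of_int p) z"

lemma mapi_mult: "map_poly (of_int :: int \<Rightarrow> complex) (p * q) = map_poly of_int p * map_poly of_int q"
  by (simp add: poly_eq_iff coeff_map_poly coeff_mult of_int_sum)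

lemma ev_mult [simp]: "ev (p * q) z = ev p z * ev q z"
  by (simp add: ev_def mapi_mult)

lemma ev_add [simp]: "ev (p + q) z = ev p z + ev q z"
proof -
  have "map_poly (of_int :: int \<Rightarrow> complex) (p + q) = map_poly of_int p + map_poly of_int q"
    by (simp add: poly_eq_iff coeff_map_poly)
  then show ?thesis by (simp add: ev_def)
qed

lemma ev_diff [simp]: "ev (p - q) z = ev p z - ev q z"
proof -
  have "map_poly (of_int :: int \<Rightarrow> complex) (p - q) = map_poly of_int p - map_poly of_int q"
    by (simp add: poly_eq_iff coeff_map_poly)
  then show ?thesis by (simp add: ev_def)
qed

lemma ev_smult [simp]: "ev (smult c p) z = of_int c * ev p z"
proof -
  have "map_poly (of_int :: int \<Rightarrow> complex) (smult c p) = smult (of_int c) (map_poly of_int p)"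
    by (simp add: poly_eq_iff coeff_map_poly)
  then show ?thesis by (simp add: ev_def)
qed

lemma ev_monom [simp]: "ev (monom c n) z = of_int c * z ^ n"
  by (simp add: ev_def map_poly_monom poly_monom)

lemma ev_zero [simp]: "ev 0 z = 0"
  by (simp add: ev_def)

lemma ev_const [simp]: "ev [:c:] z = of_int c"
  by (cases "c = 0") (simp_all add: ev_def map_poly_pCons)

lemma ev_one [simp]: "ev 1 z = 1"
  by (simp add: ev_def)

lemma ev_pCons [simp]: "ev (pCons a p) z = of_int a + z * ev p z"
  by (simp add: ev_def map_poly_pCons)

lemma ev_pcompose: "ev (pcompose g q) z = ev g (ev q z)"
  by (induction g rule: pCons_induct) (simp_all add: pcompose_pCons)

lemma ev_power [simp]: "ev (p ^ n) z = ev p z ^ n"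
  by (induction n) simp_all

lemma pCons_as_X: "pCons a (g::int poly) = [:a:] + monom 1 1 * g"
  by (simp add: poly_eq_iff coeff_pCons coeff_monom_mult split: nat.split)

lemma const_power: "[:a:] ^ n = [:(a::int) ^ n:]"
  by (induction n) auto

lemma of_nat_poly_smult: "(of_nat n :: int poly) * M = smult (int n) M"
  by (simp add: of_nat_poly)

lemma frob:
  fixes g :: "int poly"
  assumes l: "prime l"
  shows "\<exists>E. g ^ l = pcompose g (monom 1 l) + smult (int l) E"
proof (induction g rule: pCons_induct)
  case 0
  have "l > 0" using l prime_gt_0_nat by blast
  then show ?case by (intro exI[of _ 0]) (simp add: power_0_left)
next
  case (pCons a g)
  obtain E1 where E1: "g ^ l = pcompose g (monom 1 l) + smult (int l) E1" using pCons.IH by blast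
  obtain M where M: "([:a:] + monom 1 1 * g) ^ l = [:a:] ^ l + (monom 1 1 * g) ^ l + of_nat l * M"
    using binom_prime[OF l] by blast
  obtain t where t: "a ^ l - a = int l * t" using fermat_int[OF l, of a] by (auto simp: dvd_def)
  have a1: "[:a:] ^ l = [:a:] + smult (int l) [:t:]"
    unfolding const_power using t by (simp add: algebra_simps)
  have a2: "(monom 1 1 * g) ^ l = monom 1 l * g ^ l"
    by (simp add: power_mult_distrib monom_power)
  have "pCons a g ^ l = [:a:] + smult (int l) [:t:] + monom 1 l * (pcompose g (monom 1 l) + smult (int l) E1)
        + smult (int l) M"
    unfolding pCons_as_X[of a g] M a1 a2 E1 of_nat_poly_smult by simp
  also have "\<dots> = pcompose (pCons a g) (monom 1 l) + smult (int l) ([:t:] + monom 1 l * E1 + M)"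
    by (simp add: pcompose_pCons algebra_simps smult_add_right)
  finally show ?case by blast
qed

lemma mod_contra:
  fixes f T K :: "int poly"
  assumes lc: "lead_coeff f = 1" and df: "degree f \<ge> 1" and nd: "\<not> l dvd c"
  shows "f * T \<noteq> [:c:] + smult l K"
proof
  assume eq: "f * T = [:c:] + smult l K"
  show False
  proof (cases "\<forall>i. l dvd coeff T i")
    case True
    have c: "c = coeff (f * T) 0 - l * coeff K 0" using eq by simp
    have "l dvd coeff (f * T) 0 - l * coeff K 0" by (rule dvd_diff) (use True in \<open>simp_all add: coeff_mult_0\<close>)
    then show False using nd c by simp
  next
    case False
    then obtain i0 where i0: "\<not> l dvd coeff T i0" by blast
    define d where "d = (GREATEST i. \<not> l dvd coeff T i)"
    have bnd: "\<And>i. \<not> l dvd coeff T i \<Longrightarrow> i \<le> degree T"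
      by (metis coeff_eq_0 dvd_0_right not_le_imp_less)
    have dprop: "\<not> l dvd coeff T d" unfolding d_def
      by (rule GreatestI_nat[of _ i0 "degree T"]) (use i0 bnd in auto)
    have dmax: "\<And>i. \<not> l dvd coeff T i \<Longrightarrow> i \<le> d" unfolding d_def
      by (rule Greatest_le_nat[of _ _ "degree T"]) (use bnd in auto)
    define n where "n = degree f + d"
    have "coeff (f * T) n = (\<Sum>i\<le>n. coeff f i * coeff T (n - i))" by (simp add: coeff_mult)
    also have "\<dots> = coeff f (degree f) * coeff T (n - degree f) + (\<Sum>i\<in>{..n} - {degree f}. coeff f i * coeff T (n - i))"
      by (subst sum.remove[of _ "degree f"]) (auto simp: n_def)
    finally have cf: "coeff (f * T) n = coeff T d + (\<Sum>i\<in>{..n} - {degree f}. coeff f i * coeff T (n - i))"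
      using lc by (simp add: n_def)
    have "l dvd (\<Sum>i\<in>{..n} - {degree f}. coeff f i * coeff T (n - i))"
    proof (rule dvd_sum)
      fix i assume i: "i \<in> {..n} - {degree f}"
      show "l dvd coeff f i * coeff T (n - i)"
      proof (cases "i < degree f")
        case True
        then have "n - i > d" using i by (auto simp: n_def)
        then have "l dvd coeff T (n - i)" using dmax by (meson not_le)
        then show ?thesis by simp
      next
        case False
        then have "i > degree f" using i by auto
        then show ?thesis by (simp add: coeff_eq_0)
      qed
    qed
    moreover have "coeff (f * T) n = l * coeff K n" using eq df by (simp add: n_def coeff_pCons split: nat.split)
    ultimately have "l dvd l * coeff K n - (\<Sum>i\<in>{..n} - {degree f}. coeff f i * coeff T (n - i))"
      by (intro dvd_diff) simp_all
    moreover have "coeff T d = l * coeff K n - (\<Sum>i\<in>{..n} - {degree f}. coeff f i * coeff T (n - i))"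
      using cf \<open>coeff (f * T) n = l * coeff K n\<close> by simp
    ultimately have "l dvd coeff T d" by simp
    then show False using dprop by simp
  qed
qed

definition prim :: "complex \<Rightarrow> nat \<Rightarrow> bool" where
  "prim w m \<longleftrightarrow> m > 0 \<and> (\<forall>j. w ^ j = 1 \<longleftrightarrow> m dvd j)"

lemma prim_pow:
  assumes "prim w m" "coprime c m"
  shows "prim (w ^ c) m"
  using assms unfolding prim_def
  by (simp add: power_mult[symmetric] coprime_dvd_mult_right_iff coprime_commute)

lemma lead_coeff_F:
  assumes "m > 0"
  shows "degree (monom 1 m - 1 :: int poly) = m" "lead_coeff (monom 1 m - 1 :: int poly) = 1"
proof -
  have "degree (monom 1 m - 1 :: int poly) \<le> max (degree (monom 1 m :: int poly)) (degree (1::int poly))"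
    by (rule degree_diff_le_max)
  then have a: "degree (monom 1 m - 1 :: int poly) \<le> m" by (simp add: degree_monom_eq)
  have "coeff (monom 1 m - 1 :: int poly) m = 1" using assms by simp
  then have b: "m \<le> degree (monom 1 m - 1 :: int poly)" by (intro le_degree) simp
  show "degree (monom 1 m - 1 :: int poly) = m" using a b by (rule antisym)
  then show "lead_coeff (monom 1 m - 1 :: int poly) = 1" using assms by simp
qed

lemma minpoly:
  assumes pw: "prim w m"
  shows "\<exists>f. lead_coeff f = 1 \<and> degree f \<ge> 1 \<and> ev f w = 0 \<and> (\<forall>h. ev h w = 0 \<longrightarrow> f dvd h)"
proof -
  have m0: "m > 0" and wm: "w ^ m = 1" using pw by (auto simp: prim_def)
  define F :: "int poly" where "F = monom 1 m - 1"
  have F0: "F \<noteq> 0" using lead_coeff_F[OF m0] by (auto simp: F_def)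
  have evF: "ev F w = 0" using wm by (simp add: F_def)
  define d where "d = (LEAST n. \<exists>p. p \<noteq> 0 \<and> ev p w = 0 \<and> degree p = n)"
  have "\<exists>p. p \<noteq> 0 \<and> ev p w = 0 \<and> degree p = d"
    unfolding d_def by (rule LeastI_ex) (use F0 evF in blast)
  then obtain f0 where f0: "f0 \<noteq> 0" "ev f0 w = 0" "degree f0 = d" by blast
  have dmin: "\<And>p. p \<noteq> 0 \<Longrightarrow> ev p w = 0 \<Longrightarrow> d \<le> degree p"
    unfolding d_def by (rule Least_le) blast
  define f1 where "f1 = primitive_part f0"
  have cf0: "content f0 \<noteq> 0" using f0 by simp
  have f1_0: "f1 \<noteq> 0" using f0 by (simp add: f1_def)
  have cf1: "content f1 = 1" using f0 by (simp add: f1_def)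
  have df1: "degree f1 = d" using f0 by (simp add: f1_def)
  have "ev f0 w = of_int (content f0) * ev f1 w"
    by (metis content_times_primitive_part ev_smult f1_def)
  then have evf1: "ev f1 w = 0" using f0 cf0 by simp
  have dvd1: "f1 dvd h" if hw: "ev h w = 0" for h
  proof -
    obtain q r where qr: "pseudo_divmod h f1 = (q, r)" by (cases "pseudo_divmod h f1") auto
    define c where "c = coeff f1 (degree f1) ^ (Suc (degree h) - degree f1)"
    have e1: "smult c h = f1 * q + r" using pseudo_divmod(1)[OF f1_0 qr] by (simp add: c_def)
    have e2: "r = 0 \<or> degree r < degree f1" using pseudo_divmod(2)[OF f1_0 qr] .
    have c0: "c \<noteq> 0" using f1_0 by (simp add: c_def)
    have "ev r w = of_int c * ev h w - ev f1 w * ev q w"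
      using arg_cong[OF e1, of "\<lambda>p. ev p w"] by simp
    then have "ev r w = 0" using hw evf1 by simp
    then have r0: "r = 0"
    proof (rule contrapos_pp)
      assume "r \<noteq> 0"
      then have "degree r < d" using e2 df1 by simp
      then show "ev r w \<noteq> 0" using dmin[of r] \<open>r \<noteq> 0\<close> by linarith
    qed
    then have e3: "smult c h = f1 * q" using e1 by simp
    have "content (smult c h) = content q"
      unfolding e3 content_mult cf1 by simp
    then have "normalize c * content h = content q" by simp
    then have "normalize c dvd content q" by (metis dvd_triv_left)
    then have "c dvd content q" by simp
    then have cq: "\<And>i. c dvd coeff q i" using content_dvd_coeff dvd_trans by blast
    define q' where "q' = map_poly (\<lambda>a. a div c) q"
    have "smult c q' = q"
      by (simp add: poly_eq_iff q'_def coeff_map_poly cq)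
    then have "smult c h = smult c (f1 * q')" using e3 by (metis mult_smult_right)
    then have "h = f1 * q'" using c0 by (simp add: poly_eq_iff)
    then show ?thesis by simp
  qed
  obtain g where Fg: "F = f1 * g" using dvd1[OF evF] by blast
  have "lead_coeff F = 1" using lead_coeff_F[OF m0] by (simp add: F_def)
  then have "lead_coeff (f1 * g) = 1" using Fg by simp
  then have "lead_coeff f1 * lead_coeff g = 1" by (simp add: lead_coeff_mult)
  then have lc1: "lead_coeff f1 * lead_coeff f1 = 1"
    by (auto simp: zmult_eq_1_iff)
  define f where "f = smult (lead_coeff f1) f1"
  have "lead_coeff f = 1" using lc1 f1_0 by (simp add: f_def)
  moreover have "ev f w = 0" using evf1 by (simp add: f_def)
  moreover have "f dvd h" if "ev h w = 0" for h
  proof -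
    have "f1 = smult (lead_coeff f1) f" using lc1 by (simp add: f_def)
    then have "f dvd f1" by (metis dvd_refl dvd_smult)
    then show ?thesis using dvd1[OF that] dvd_trans by blast
  qed
  moreover have "degree f \<ge> 1"
  proof (rule ccontr)
    assume "\<not> degree f \<ge> 1"
    then have "degree f = 0" by simp
    then have "f = [:coeff f 0:]" by (auto simp: poly_eq_iff coeff_pCons coeff_eq_0 split: nat.split)
    then have "ev f w = 1" using \<open>lead_coeff f = 1\<close> \<open>degree f = 0\<close> by (metis ev_const of_int_1)
    then show False using \<open>ev f w = 0\<close> by simp
  qed
  ultimately show ?thesis by blast
qed

lemma pow_split:
  fixes x y :: "'a::comm_ring_1"
  shows "\<exists>W. (x + y) ^ n = y ^ n + x * W"
proof (induction n)
  case 0 then show ?case by (intro exI[of _ 0]) simp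
next
  case (Suc n)
  then obtain W where W: "(x + y) ^ n = y ^ n + x * W" by blast
  have "(x + y) ^ Suc n = y ^ Suc n + x * (y ^ n + (x + y) * W)"
    by (simp add: W algebra_simps)
  then show ?case by blast
qed

lemma cyc_prime:
  assumes l: "prime l" and lm: "\<not> l dvd m" and pw: "prim w m" and A: "ev A w = 0"
  shows "ev A (w ^ l) = 0"
proof -
  have m0: "m > 0" and wm: "w ^ m = 1" using pw by (auto simp: prim_def)
  obtain f where f: "lead_coeff f = 1" "degree f \<ge> 1" "ev f w = 0" "\<And>h. ev h w = 0 \<Longrightarrow> f dvd h"
    using minpoly[OF pw] by blast
  obtain qA where qA: "A = f * qA" using f(4)[OF A] by blast
  have "ev f (w ^ l) = 0"
  proof (rule ccontr)
    assume nz: "ev f (w ^ l) \<noteq> 0"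
    have clm: "coprime l m" using l lm by (simp add: prime_imp_coprime)
    have pw': "prim (w ^ l) m" by (rule prim_pow[OF pw clm])
    obtain g where g: "lead_coeff g = 1" "degree g \<ge> 1" "ev g (w ^ l) = 0" "\<And>h. ev h (w ^ l) = 0 \<Longrightarrow> g dvd h"
      using minpoly[OF pw'] by blast
    define F :: "int poly" where "F = monom 1 m - 1"
    have evF: "\<And>z. z ^ m = 1 \<Longrightarrow> ev F z = 0" by (simp add: F_def)
    obtain q1 where q1: "F = f * q1" using f(4)[OF evF[OF wm]] by blast
    have "(w ^ l) ^ m = (w ^ m) ^ l" by (simp add: power_mult[symmetric] mult.commute)
    then have "(w ^ l) ^ m = 1" using wm by simp
    then have "ev f (w ^ l) * ev q1 (w ^ l) = 0" using evF q1 by (metis ev_mult)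
    then have "ev q1 (w ^ l) = 0" using nz by simp
    then obtain q2 where q2: "q1 = g * q2" using g(4) by blast
    define G where "G = pcompose g (monom 1 l)"
    have "ev G w = 0" unfolding G_def ev_pcompose using g(3) by simp
    then obtain s where s: "G = f * s" using f(4) by blast
    obtain E where E: "g ^ l = G + smult (int l) E" using frob[OF l, of g] by (auto simp: G_def)
    define a where "a = monom 1 1 * pderiv (g * q2) - smult (int m) (g * q2)"
    define b where "b = monom 1 1 * pderiv f * q2"
    have pF: "pderiv F = monom (int m) (m - 1)"
      by (simp add: F_def pderiv_diff pderiv_monom)
    have "monom 1 1 * pderiv F - smult (int m) F = [:int m:]"
      unfolding pF using m0 by (simp add: F_def mult_monom smult_diff_right smult_monom monom_0)
    moreover have "monom 1 1 * pderiv F - smult (int m) F = f * a + g * b"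
      unfolding q1 q2 a_def b_def by (simp add: pderiv_mult algebra_simps)
    ultimately have key: "[:int m:] = f * a + g * b" by simp
    obtain W where W: "(f * a + g * b) ^ l = (g * b) ^ l + (f * a) * W"
      using pow_split by blast
    have "[:int m ^ l:] = [:int m:] ^ l" by (simp add: const_power)
    also have "\<dots> = (g * b) ^ l + (f * a) * W" using key W by simp
    also have "\<dots> = f * (s * b ^ l + a * W) + smult (int l) (E * b ^ l)"
      by (simp add: power_mult_distrib E s algebra_simps)
    finally have eq: "f * (s * b ^ l + a * W) = [:int m ^ l:] + smult (int l) (- (E * b ^ l))"
      by simp
    have "\<not> int l dvd int m ^ l"
    proof
      assume "int l dvd int m ^ l"
      then have "l dvd m ^ l" by (metis of_nat_dvd_iff of_nat_power)
      then have "l dvd m" using l prime_dvd_power by blast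
      then show False using lm by simp
    qed
    then show False using mod_contra[OF f(1) f(2), of "int l" "int m ^ l"] eq by blast
  qed
  then show ?thesis using qA by simp
qed

lemma cyc:
  assumes pw: "prim w m" and cb: "coprime b m" and A: "ev A w = 0"
  shows "ev A (w ^ b) = 0"
  using cb
proof (induction b rule: less_induct)
  case (less b)
  show ?case
  proof (cases "b = 0")
    case True
    then have "m = 1" using less.prems by simp
    then have "w = 1" using pw unfolding prim_def by (metis One_nat_def dvd_1_left power_one_right)
    then show ?thesis using True A by simp
  next
    case False
    show ?thesis
    proof (cases "b = 1")
      case True then show ?thesis using A by simp
    next
      case False
      then obtain l where l: "prime l" "l dvd b" using prime_factor_nat by blast
      then obtain c where bc: "b = l * c" by blast
      have c0: "c \<noteq> 0" using bc \<open>b \<noteq> 0\<close> by auto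
      have cb: "c < b" using bc c0 prime_gt_1_nat[OF l(1)] by simp
      have ccop: "coprime c m" using less.prems bc by simp
      have lcop: "coprime l m" using less.prems bc by simp
      have lm: "\<not> l dvd m"
      proof
        assume "l dvd m"
        then have "is_unit l" using coprime_common_divisor[OF lcop dvd_refl] by blast
        then show False using l(1) by simp
      qed
      have "ev A (w ^ c) = 0" using less.IH[OF cb ccop] .
      then have "ev A ((w ^ c) ^ l) = 0" by (rule cyc_prime[OF l(1) lm prim_pow[OF pw ccop]])
      then show ?thesis by (simp add: bc power_mult mult.commute)
    qed
  qed
qed

lemma nt_dvd:
  assumes m0: "m > 0" and tu: "totient m \<le> u" and uv: "2 * u \<le> v"
  shows "m dvd dlcm v"
proof -
  define L where "L = Lcm {1..v}"
  have L0: "L \<noteq> 0" unfolding L_def by (subst Lcm_0_iff) auto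
  show ?thesis unfolding dlcm_def L_def[symmetric]
  proof (rule multiplicity_le_imp_dvd)
    show "m \<noteq> 0" using m0 by simp
  next
    fix q :: nat assume q: "prime q"
    define a where "a = multiplicity q m"
    show "multiplicity q m \<le> multiplicity q L"
    proof (cases "a = 0")
      case True then show ?thesis by (simp add: a_def)
    next
      case False
      have qa: "q ^ a dvd m" unfolding a_def by (rule multiplicity_dvd)
      have "totient (q ^ a) \<le> totient m" by (rule totient_dvd_mono[OF qa m0])
      moreover have "totient (q ^ a) = q ^ (a - 1) * (q - 1)" using totient_prime_power[OF q] False by simp
      moreover have "q ^ a \<le> 2 * (q ^ (a - 1) * (q - 1))"
      proof -
        have q2: "q \<ge> 2" using q prime_ge_2_nat by blast
        have "q ^ a = q ^ Suc (a - 1)" using False by simp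
        also have "\<dots> = q ^ (a - 1) * q" by (rule power_Suc2)
        finally have "q ^ a = q ^ (a - 1) * q" .
        also have "\<dots> \<le> q ^ (a - 1) * (2 * (q - 1))" using q2 by (intro mult_left_mono) auto
        finally show ?thesis by simp
      qed
      ultimately have "q ^ a \<le> v" using tu uv by linarith
      moreover have "q ^ a \<ge> 1" using prime_gt_0_nat[OF q] by (simp add: Suc_le_eq)
      ultimately have "q ^ a dvd L" unfolding L_def by (intro dvd_Lcm) auto
      moreover have nu: "\<not> is_unit q" using prime_gt_1_nat[OF q] by simp
      ultimately show ?thesis using power_dvd_iff_le_multiplicity[OF L0 nu, of a] by (simp add: a_def)
    qed
  qed
qed

lemma exp_le_inv: "0 \<le> x \<Longrightarrow> x < 1 \<Longrightarrow> exp x \<le> 1 / (1 - (x::real))"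
proof -
  assume x: "0 \<le> x" "x < 1"
  have "1 - x \<le> exp (- x)" using exp_ge_add_one_self[of "-x"] by simp
  then have "(1 - x) * exp x \<le> exp (-x) * exp x" by (intro mult_right_mono) auto
  then have "(1 - x) * exp x \<le> 1" by (simp add: exp_minus)
  then show ?thesis using x by (simp add: field_simps)
qed

lemma v_ge:
  "2 * u \<le> nat \<lfloor>16 * real u * ln (ln (real u + 3))\<rfloor>"
proof (cases "u = 0")
  case True then show ?thesis by simp
next
  case False
  have e1: "exp (1/8) \<le> (8/7::real)" using exp_le_inv[of "1/8"] by simp
  have e2: "exp (2/7) \<le> (7/5::real)" using exp_le_inv[of "2/7"] by simp
  have "exp (8/7::real) = exp (2/7) ^ 4" by (simp add: exp_of_nat_mult[symmetric])
  also have "\<dots> \<le> (7/5) ^ 4" by (rule power_mono[OF e2]) simp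
  also have "\<dots> \<le> 4" by (simp add: power_divide)
  finally have "exp (8/7::real) \<le> 4" .
  then have "8/7 \<le> ln (4::real)" by (metis exp_gt_zero exp_le_cancel_iff exp_ln zero_less_numeral)
  moreover have "ln (4::real) \<le> ln (real u + 3)" using False by simp
  ultimately have "exp (1/8) \<le> ln (real u + 3)" using e1 by linarith
  then have "1/8 \<le> ln (ln (real u + 3))"
    by (metis exp_gt_zero exp_le_cancel_iff exp_ln less_le_trans)
  then have "real u * (1/8) \<le> real u * ln (ln (real u + 3))" by (intro mult_left_mono) auto
  then have "2 * real u \<le> 16 * real u * ln (ln (real u + 3))" by linarith
  then have "int (2 * u) \<le> \<lfloor>16 * real u * ln (ln (real u + 3))\<rfloor>"
    by (simp add: le_floor_iff)
  then show ?thesis by linarith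
qed

lemma ev_sum: "ev (sum f S) z = (\<Sum>i\<in>S. ev (f i) z)"
  by (induction S rule: infinite_finite_induct) auto

lemma prim_exists:
  assumes zp: "z ^ p = 1" and p0: "p > 0"
  shows "\<exists>m. prim z m"
proof -
  define m where "m = (LEAST j. j > 0 \<and> z ^ j = 1)"
  have m: "m > 0 \<and> z ^ m = 1" unfolding m_def by (rule LeastI[of _ p]) (use assms in auto)
  have mmin: "\<And>j. j > 0 \<Longrightarrow> z ^ j = 1 \<Longrightarrow> m \<le> j" unfolding m_def by (rule Least_le) auto
  have "z ^ j = 1 \<longleftrightarrow> m dvd j" for j
  proof
    assume zj: "z ^ j = 1"
    have "z ^ j = z ^ (m * (j div m) + j mod m)" by simp
    also have "\<dots> = (z ^ m) ^ (j div m) * z ^ (j mod m)" by (simp only: power_add power_mult)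
    finally have "z ^ (j mod m) = 1" using zj m by simp
    moreover have "j mod m < m" using m by simp
    ultimately have "j mod m = 0" using mmin by (metis leD neq0_conv)
    then show "m dvd j" by auto
  next
    assume "m dvd j" then obtain k where "j = m * k" by blast
    then show "z ^ j = 1" using m by (simp add: power_mult)
  qed
  then show ?thesis using m unfolding prim_def by blast
qed

lemma pow_mod_prim:
  assumes "prim z m"
  shows "z ^ a = z ^ (a mod m)"
proof -
  have zm: "z ^ m = 1" using assms by (simp add: prim_def)
  have "z ^ a = z ^ (m * (a div m) + a mod m)" by simp
  also have "\<dots> = (z ^ m) ^ (a div m) * z ^ (a mod m)" by (simp only: power_add power_mult)
  finally show ?thesis using zm by simp
qed

lemma periodic_mult:
  fixes x :: "nat \<Rightarrow> 'a" and p q t :: nat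
  assumes per: "\<And>t. x (t + p) = x t"
  shows "x (t + p * q) = x t"
proof (induction q)
  case 0 then show ?case by simp
next
  case (Suc q)
  have "x (t + p * Suc q) = x ((t + p * q) + p)" by (simp add: algebra_simps)
  then show ?case using per Suc by simp
qed

lemma periodic_mod:
  fixes x :: "nat \<Rightarrow> 'a" and p t :: nat
  assumes per: "\<And>t. x (t + p) = x t"
  shows "x t = x (t mod p)"
proof -
  have "t = t mod p + p * (t div p)" by (rule mod_mult_div_eq[symmetric])
  then have "x t = x (t mod p + p * (t div p))" by simp
  also have "\<dots> = x (t mod p)" by (rule periodic_mult[of x p, OF per])
  finally show ?thesis .
qed

lemma shift1:
  fixes y :: "nat \<Rightarrow> int" and z :: complex
  assumes per: "\<And>t. y (t + p) = y t" and zp: "z ^ p = 1" and p0: "p > 0"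
  shows "z * (\<Sum>i<p. of_int (y (i + 1)) * z ^ i) = (\<Sum>i<p. of_int (y i) * z ^ i)"
proof -
  obtain n where pn: "p = Suc n" using p0 by (cases p) auto
  define f where "f i = of_int (y i) * z ^ i" for i
  have "z * (\<Sum>i<p. of_int (y (i + 1)) * z ^ i) = (\<Sum>i<p. f (Suc i))"
    by (simp add: f_def sum_distrib_left algebra_simps)
  also have "\<dots> = (\<Sum>i<n. f (Suc i)) + f (Suc n)" unfolding pn by (rule sum.lessThan_Suc)
  also have "f (Suc n) = f 0"
  proof -
    have "y (Suc n) = y 0" using per[of 0] pn by simp
    then show ?thesis using zp pn by (simp add: f_def)
  qed
  also have "(\<Sum>i<n. f (Suc i)) + f 0 = (\<Sum>i<p. f i)" unfolding pn sum.lessThan_Suc_shift by simp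
  finally show ?thesis by (simp add: f_def)
qed

lemma shiftj:
  fixes x :: "nat \<Rightarrow> int" and z :: complex
  assumes per: "\<And>t. x (t + p) = x t" and zp: "z ^ p = 1" and p0: "p > 0"
  shows "z ^ j * (\<Sum>i<p. of_int (x (i + j)) * z ^ i) = (\<Sum>i<p. of_int (x i) * z ^ i)"
proof (induction j)
  case 0 then show ?case by simp
next
  case (Suc j)
  define y where "y t = x (t + j)" for t
  have pery: "\<And>t. y (t + p) = y t" unfolding y_def using per by (metis add.assoc add.commute)
  have "z ^ Suc j * (\<Sum>i<p. of_int (x (i + Suc j)) * z ^ i)
      = z ^ j * (z * (\<Sum>i<p. of_int (y (i + 1)) * z ^ i))"
    by (simp add: y_def algebra_simps)
  also have "\<dots> = z ^ j * (\<Sum>i<p. of_int (y i) * z ^ i)" using shift1[of y p z, OF pery zp p0] by simp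
  also have "\<dots> = (\<Sum>i<p. of_int (x i) * z ^ i)" using Suc by (simp add: y_def)
  finally show ?case .
qed

lemma core:
  fixes x :: "nat \<Rightarrow> int" and c :: "nat \<Rightarrow> complex"
  assumes p0: "p > 0" and per: "\<And>t. x (t + p) = x t" and ce: "c e \<noteq> 0" and eu: "e \<le> u"
    and rec: "\<And>t. (\<Sum>i\<le>e. c i * of_int (x (t + e - i))) = 0" and uv: "2 * u \<le> v"
  shows "x (t + dlcm v) = x t"
proof -
  define k where "k = dlcm v"
  define Ah where "Ah z = (\<Sum>i<p. of_int (x i) * z ^ i)" for z :: complex
  define S where "S j z = (\<Sum>i<p. of_int (x (i + j)) * z ^ i)" for j and z :: complex
  have shift: "z ^ j * S j z = Ah z" if "z ^ p = 1" for z j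
    unfolding S_def Ah_def by (rule shiftj[of x p z j, OF per that p0])
  have z0: "z \<noteq> 0" if "z ^ p = 1" for z :: complex
    using that p0 by (metis power_0_left zero_neq_one neq0_conv)
  define Cp :: "complex poly" where "Cp = (\<Sum>r\<le>e. monom (c r) r)"
  have Cp_eval: "poly Cp z = (\<Sum>r\<le>e. c r * z ^ r)" for z
    by (simp add: Cp_def poly_sum poly_monom)
  have "coeff Cp e = c e" by (simp add: Cp_def coeff_sum coeff_monom)
  then have Cp0: "Cp \<noteq> 0" using ce by auto
  have Cdeg: "degree Cp \<le> e" by (rule degree_le) (auto simp: Cp_def coeff_sum coeff_monom)
  have CA: "poly Cp z * Ah z = 0" if zp: "z ^ p = 1" for z
  proof -
    have "(\<Sum>i<p. z ^ i * (\<Sum>r\<le>e. c r * of_int (x (i + e - r)))) = 0" using rec by simp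
    moreover have "(\<Sum>i<p. z ^ i * (\<Sum>r\<le>e. c r * of_int (x (i + e - r))))
        = (\<Sum>r\<le>e. c r * S (e - r) z)"
    proof -
      have "(\<Sum>i<p. z ^ i * (\<Sum>r\<le>e. c r * of_int (x (i + e - r))))
          = (\<Sum>i<p. \<Sum>r\<le>e. c r * (of_int (x (i + (e - r))) * z ^ i))"
        by (intro sum.cong refl) (auto simp: sum_distrib_left algebra_simps intro!: sum.cong)
      also have "\<dots> = (\<Sum>r\<le>e. \<Sum>i<p. c r * (of_int (x (i + (e - r))) * z ^ i))"
        by (rule sum.swap)
      also have "\<dots> = (\<Sum>r\<le>e. c r * S (e - r) z)"
        by (simp add: S_def sum_distrib_left)
      finally show ?thesis .
    qed
    ultimately have e0: "(\<Sum>r\<le>e. c r * S (e - r) z) = 0" by simp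
    have "poly Cp z * Ah z = (\<Sum>r\<le>e. c r * z ^ r * (z ^ (e - r) * S (e - r) z))"
      unfolding Cp_eval sum_distrib_right using shift[OF zp] by simp
    also have "\<dots> = (\<Sum>r\<le>e. z ^ e * (c r * S (e - r) z))"
    proof (intro sum.cong refl)
      fix r assume "r \<in> {..e}"
      then have "z ^ e = z ^ r * z ^ (e - r)" by (simp add: power_add[symmetric])
      then show "c r * z ^ r * (z ^ (e - r) * S (e - r) z) = z ^ e * (c r * S (e - r) z)"
        by (simp add: algebra_simps)
    qed
    also have "\<dots> = z ^ e * (\<Sum>r\<le>e. c r * S (e - r) z)" by (simp add: sum_distrib_left)
    finally show ?thesis using e0 by simp
  qed
  define T where "T = {z. z ^ p = 1 \<and> Ah z \<noteq> 0}"
  have TC: "T \<subseteq> {z. poly Cp z = 0}" unfolding T_def using CA by auto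
  have finT: "finite T" using TC poly_roots_finite[OF Cp0] finite_subset by blast
  have cardT: "card T \<le> u"
  proof -
    have "card T \<le> card {z. poly Cp z = 0}" by (rule card_mono[OF poly_roots_finite[OF Cp0] TC])
    also have "\<dots> \<le> degree Cp" by (rule card_poly_roots_bound[OF Cp0])
    finally show ?thesis using Cdeg eu by linarith
  qed
  define Ap :: "int poly" where "Ap = (\<Sum>i<p. monom (x i) i)"
  have evA: "ev Ap z = Ah z" for z by (simp add: Ap_def Ah_def ev_sum)
  have Tk: "z ^ k = 1" if zT: "z \<in> T" for z
  proof -
    have zp: "z ^ p = 1" and Az: "Ah z \<noteq> 0" using zT by (auto simp: T_def)
    obtain m where pm: "prim z m" using prim_exists[OF zp p0] by blast
    have m0: "m > 0" using pm by (simp add: prim_def)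
    have sub: "(\<lambda>b. z ^ b) ` totatives m \<subseteq> T"
    proof
      fix y assume "y \<in> (\<lambda>b. z ^ b) ` totatives m"
      then obtain b where b: "b \<in> totatives m" "y = z ^ b" by blast
      have cb: "coprime b m" using b(1) by (simp add: totatives_def)
      have "y ^ p = 1" using zp b(2) by (metis power_mult mult.commute power_one)
      moreover have "Ah y \<noteq> 0"
      proof
        assume "Ah y = 0"
        then have evy: "ev Ap (z ^ b) = 0" using evA b(2) by simp
        obtain b' where bb: "[b * b' = Suc 0] (mod m)" using cong_solve_coprime_nat[OF cb] by blast
        have "coprime (Suc 0) m" by simp
        then have "coprime (b * b') m" using cong_imp_coprime[OF cong_sym[OF bb]] by blast
        then have cb': "coprime b' m" by simp
        have "ev Ap ((z ^ b) ^ b') = 0" by (rule cyc[OF prim_pow[OF pm cb] cb' evy])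
        moreover have "(z ^ b) ^ b' = z"
        proof -
          have "(z ^ b) ^ b' = z ^ (b * b')" by (simp add: power_mult)
          also have "\<dots> = z ^ ((b * b') mod m)" by (rule pow_mod_prim[OF pm])
          also have "(b * b') mod m = Suc 0 mod m" using bb by (simp add: cong_def)
          also have "z ^ (Suc 0 mod m) = z ^ Suc 0" by (rule pow_mod_prim[OF pm, symmetric])
          finally show ?thesis by simp
        qed
        ultimately show False using Az evA by simp
      qed
      ultimately show "y \<in> T" by (simp add: T_def)
    qed
    have inj: "inj_on (\<lambda>b. z ^ b) (totatives m)"
    proof (rule inj_onI)
      have ne: "z \<noteq> 0" using z0[OF zp] .
      have main: "a = b" if ab: "a \<le> b" "a \<in> totatives m" "b \<in> totatives m" "z ^ a = z ^ b" for a b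
      proof -
        have "z ^ b = z ^ a * z ^ (b - a)" using ab(1) by (simp add: power_add[symmetric])
        then have "z ^ (b - a) = 1" using ab(4) ne by simp
        then have "m dvd (b - a)" using pm by (simp add: prim_def)
        moreover have "b - a < m" using ab(2,3) by (auto simp: totatives_def)
        ultimately have "b - a = 0" by (metis dvd_imp_le neq0_conv not_le)
        then show ?thesis using ab(1) by simp
      qed
      fix a b assume "a \<in> totatives m" "b \<in> totatives m" "z ^ a = z ^ b"
      then show "a = b" using main[of a b] main[of b a] by (cases "a \<le> b") auto
    qed
    have "totient m = card ((\<lambda>b. z ^ b) ` totatives m)"
      unfolding totient_def by (rule card_image[OF inj, symmetric])
    also have "\<dots> \<le> card T" by (rule card_mono[OF finT sub])
    finally have "totient m \<le> u" using cardT by linarith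
    then have "m dvd k" unfolding k_def by (rule nt_dvd[OF m0 _ uv])
    then show ?thesis using pm by (simp add: prim_def)
  qed
  define Yp :: "complex poly" where "Yp = (\<Sum>i<p. monom (of_int (x (i + k) - x i)) i)"
  have Yeval: "poly Yp z = S k z - Ah z" for z
    by (simp add: Yp_def S_def Ah_def poly_sum poly_monom sum_subtractf algebra_simps)
  have Yroot: "poly Yp z = 0" if zp: "z ^ p = 1" for z
  proof (cases "Ah z = 0")
    case True
    then have "z ^ k * S k z = 0" using shift[OF zp] by simp
    then have "S k z = 0" using z0[OF zp] by simp
    then show ?thesis using True Yeval by simp
  next
    case False
    then have "z ^ k = 1" using Tk zp by (simp add: T_def)
    then show ?thesis using shift[OF zp, of k] Yeval by simp
  qed
  have Y0: "Yp = 0"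
  proof (rule ccontr)
    assume nz: "Yp \<noteq> 0"
    have "{z::complex. z ^ p = 1} \<subseteq> {z. poly Yp z = 0}" using Yroot by auto
    then have "card {z::complex. z ^ p = 1} \<le> card {z. poly Yp z = 0}"
      by (rule card_mono[OF poly_roots_finite[OF nz]])
    also have "\<dots> \<le> degree Yp" by (rule card_poly_roots_bound[OF nz])
    also have "degree Yp \<le> p - 1" by (rule degree_le) (auto simp: Yp_def coeff_sum coeff_monom)
    finally show False using card_complex_roots_unity[of p] p0 by simp
  qed
  have xi: "x (i + k) = x i" if "i < p" for i
  proof -
    have "coeff Yp i = of_int (x (i + k) - x i)" using that by (simp add: Yp_def coeff_sum coeff_monom)
    then show ?thesis using Y0 by simp
  qed
  have "x (t + k) = x ((t + k) mod p)" by (rule periodic_mod[of x p, OF per])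
  also have "(t + k) mod p = (t mod p + k) mod p" by (simp add: mod_add_left_eq)
  also have "x ((t mod p + k) mod p) = x (t mod p + k)" by (rule periodic_mod[of x p, OF per, symmetric])
  also have "\<dots> = x (t mod p)" using xi p0 by simp
  also have "\<dots> = x t" by (rule periodic_mod[of x p, OF per, symmetric])
  finally show ?thesis by (simp add: k_def)
qed

lemma sum_split_first: fixes e :: nat shows "(\<Sum>l\<le>e. f l) = f 0 + (\<Sum>l\<in>{1..e}. f l)"
proof -
  have "{..e} = insert 0 {1..e}" by auto
  then show ?thesis by (simp add: sum.insert)
qed

lemma sum_split_last: fixes e :: nat shows "(\<Sum>l\<le>e. f l) = f e + (\<Sum>l<e. f l)"
proof -
  have "{..e} = insert e {..<e}" by auto
  then show ?thesis by (simp add: sum.insert)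
qed

lemma window_fwd:
  fixes y :: "nat \<Rightarrow> int" and c :: "nat \<Rightarrow> complex"
  assumes c0: "c 0 \<noteq> 0"
    and rec: "\<And>t. L \<le> t \<Longrightarrow> t + e \<le> M \<Longrightarrow> (\<Sum>l\<le>e. c l * of_int (y (t + e - l))) = 0"
    and win: "\<And>i. i < e \<Longrightarrow> y (a + q + i) = y (a + i)" and La: "L \<le> a"
  shows "a \<le> i \<Longrightarrow> i + q \<le> M \<Longrightarrow> y (i + q) = y i"
proof (induction i rule: less_induct)
  case (less i)
  show ?case
  proof (cases "i < a + e")
    case True
    have "i - a < e" using True less.prems by simp
    from win[OF this] have "y (a + q + (i - a)) = y (a + (i - a))" .
    moreover have "a + q + (i - a) = i + q" "a + (i - a) = i" using less.prems by auto
    ultimately show ?thesis by simp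
  next
    case False
    define t where "t = i - e"
    have t1: "L \<le> t" "t + e = i" using False La by (auto simp: t_def)
    have IH: "y (i + q - l) = y (i - l)" if "l \<in> {1..e}" for l
    proof -
      have "y ((i - l) + q) = y (i - l)"
        using less.IH[of "i - l"] that False less.prems by auto
      moreover have "(i - l) + q = i + q - l" using that False by auto
      ultimately show ?thesis by simp
    qed
    have r1: "c 0 * of_int (y i) + (\<Sum>l\<in>{1..e}. c l * of_int (y (i - l))) = 0"
      using rec[of t] t1 less.prems unfolding sum_split_first by simp
    have r2: "c 0 * of_int (y (i + q)) + (\<Sum>l\<in>{1..e}. c l * of_int (y (i + q - l))) = 0"
    proof -
      have tq: "t + q + e = i + q" using t1 by simp
      have "L \<le> t + q" using t1 by simp
      from rec[OF this] show ?thesis unfolding tq sum_split_first using less.prems by simp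
    qed
    have sumeq: "(\<Sum>l\<in>{1..e}. c l * of_int (y (i + q - l))) = (\<Sum>l\<in>{1..e}. c l * of_int (y (i - l)))"
      using IH by (intro sum.cong) auto
    have A: "c 0 * of_int (y (i + q)) = - (\<Sum>l\<in>{1..e}. c l * of_int (y (i - l)))"
      using r2 unfolding sumeq by (simp only: eq_neg_iff_add_eq_0)
    have B: "c 0 * of_int (y i) = - (\<Sum>l\<in>{1..e}. c l * of_int (y (i - l)))"
      using r1 by (simp only: eq_neg_iff_add_eq_0)
    have "c 0 * of_int (y (i + q)) = c 0 * of_int (y i)" using A B by simp
    then have "(of_int (y (i + q)) :: complex) = of_int (y i)" using c0 by simp
    then show ?thesis by simp
  qed
qed

lemma region_core:
  fixes y :: "nat \<Rightarrow> int" and c :: "nat \<Rightarrow> complex"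
  assumes c0: "c 0 \<noteq> 0" and ce: "c e \<noteq> 0" and eu: "e \<le> u" and uv: "2 * u \<le> v"
    and rec: "\<And>t. L \<le> t \<Longrightarrow> t + e \<le> M \<Longrightarrow> (\<Sum>l\<le>e. c l * of_int (y (t + e - l))) = 0"
    and win: "\<And>i. i < e \<Longrightarrow> y (a + q + i) = y (a + i)" and q0: "q > 0" and La: "L \<le> a"
    and top: "a + q + e \<le> M + 1"
    and i1: "a \<le> i" and i2: "i + dlcm v \<le> M"
  shows "y (i + dlcm v) = y i"
proof -
  have fwd: "y (i + q) = y i" if "a \<le> i" "i + q \<le> M" for i
    by (rule window_fwd[OF c0 rec win La that]) auto
  have ymod: "y (a + r) = y (a + r mod q)" if "a + r \<le> M" for r
    using that
  proof (induction r rule: less_induct)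
    case (less r)
    show ?case
    proof (cases "r < q")
      case True then show ?thesis by simp
    next
      case False
      have "y (a + r) = y ((a + (r - q)) + q)" using False by simp
      also have "\<dots> = y (a + (r - q))" by (rule fwd) (use False less.prems in auto)
      also have "\<dots> = y (a + (r - q) mod q)" by (rule less.IH) (use False q0 less.prems in auto)
      also have "(r - q) mod q = r mod q" using False by (simp add: le_mod_geq)
      finally show ?thesis .
    qed
  qed
  define x where "x t = y (a + t mod q)" for t
  have perx: "x (t + q) = x t" for t by (simp add: x_def)
  have recx: "(\<Sum>l\<le>e. c l * of_int (x (t + e - l))) = 0" for t
  proof -
    define t0 where "t0 = t mod q"
    have t0q: "t0 < q" using q0 by (simp add: t0_def)
    have r: "(\<Sum>l\<le>e. c l * of_int (y (a + t0 + e - l))) = 0"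
      by (rule rec) (use La t0q top in auto)
    have "y (a + t0 + e - l) = x (t + e - l)" if "l \<le> e" for l
    proof -
      have "y (a + t0 + e - l) = y (a + (t0 + e - l))" using that by (simp add: algebra_simps)
      also have "\<dots> = y (a + (t0 + e - l) mod q)" by (rule ymod) (use that t0q top in auto)
      also have "(t0 + e - l) mod q = (t + e - l) mod q"
      proof -
        have "(t0 + (e - l)) mod q = (t + (e - l)) mod q" unfolding t0_def by (simp add: mod_add_left_eq)
        then show ?thesis using that by simp
      qed
      finally show ?thesis by (simp add: x_def)
    qed
    then have "(\<Sum>l\<le>e. c l * of_int (x (t + e - l))) = (\<Sum>l\<le>e. c l * of_int (y (a + t0 + e - l)))"
      by (intro sum.cong) auto
    then show ?thesis using r by simp
  qed
  have xk: "x (t + dlcm v) = x t" for t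
    by (rule core[OF q0 perx ce eu recx uv])
  have yx: "y j = x (j - a)" if "a \<le> j" "j \<le> M" for j
  proof -
    have "y j = y (a + (j - a))" using that by simp
    also have "\<dots> = y (a + (j - a) mod q)" by (rule ymod) (use that in auto)
    finally show ?thesis by (simp add: x_def)
  qed
  have "y (i + dlcm v) = x (i + dlcm v - a)" by (rule yx) (use i1 i2 in auto)
  also have "i + dlcm v - a = (i - a) + dlcm v" using i1 by simp
  also have "x (i - a + dlcm v) = x (i - a)" by (rule xk)
  also have "\<dots> = y i" by (rule yx[symmetric]) (use i1 i2 in auto)
  finally show ?thesis .
qed

lemma F_expand:
  fixes P R :: "complex poly"
  assumes s: "\<And>i. i < s \<Longrightarrow> coeff R i = 0" and sd: "s \<le> degree R" and T: "degree R \<le> T"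
  shows "coeff (P * R) T = (\<Sum>l\<le>degree R - s. coeff R (s + l) * coeff P (T - s - l))"
proof -
  define d where "d = degree R"
  have "coeff (P * R) T = coeff (R * P) T" by (simp add: mult.commute)
  also have "\<dots> = (\<Sum>i\<le>T. coeff R i * coeff P (T - i))" by (rule coeff_mult)
  also have "\<dots> = (\<Sum>i\<in>{s..d}. coeff R i * coeff P (T - i))"
  proof (rule sum.mono_neutral_right)
    show "finite {..T}" by simp
    show "{s..d} \<subseteq> {..T}" using T by (auto simp: d_def)
    show "\<forall>i\<in>{..T} - {s..d}. coeff R i * coeff P (T - i) = 0"
    proof
      fix i assume "i \<in> {..T} - {s..d}"
      then have "i < s \<or> i > d" by auto
      then show "coeff R i * coeff P (T - i) = 0" using s by (auto simp: d_def coeff_eq_0)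
    qed
  qed
  also have "\<dots> = (\<Sum>l\<le>d - s. coeff R (s + l) * coeff P (T - (s + l)))"
  proof -
    have "{s..d} = (\<lambda>l. s + l) ` {..d - s}"
    proof
      show "{s..d} \<subseteq> (\<lambda>l. s + l) ` {..d - s}"
      proof
        fix x assume "x \<in> {s..d}"
        then show "x \<in> (\<lambda>l. s + l) ` {..d - s}" by (intro image_eqI[of _ _ "x - s"]) auto
      qed
      show "(\<lambda>l. s + l) ` {..d - s} \<subseteq> {s..d}" using sd by (auto simp: d_def)
    qed
    then show ?thesis by (simp add: sum.reindex inj_on_def)
  qed
  finally show ?thesis by (simp add: d_def)
qed

lemma lowest_coeff:
  fixes P R :: "complex poly"
  assumes P0: "P \<noteq> 0" and Rs: "coeff R s \<noteq> 0" and s: "\<And>i. i < s \<Longrightarrow> coeff R i = 0"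
  defines "i0 \<equiv> LEAST i. coeff P i \<noteq> 0"
  shows "coeff (P * R) (i0 + s) \<noteq> 0" and "\<And>i. i < i0 \<Longrightarrow> coeff P i = 0"
proof -
  have ex: "\<exists>i. coeff P i \<noteq> 0" using P0 by (meson leading_coeff_0_iff)
  have Pi0: "coeff P i0 \<noteq> 0" unfolding i0_def by (rule LeastI_ex[OF ex])
  show below: "\<And>i. i < i0 \<Longrightarrow> coeff P i = 0" unfolding i0_def using not_less_Least by blast
  have "coeff (P * R) (i0 + s) = (\<Sum>i\<le>i0 + s. coeff P i * coeff R (i0 + s - i))" by (rule coeff_mult)
  also have "\<dots> = coeff P i0 * coeff R (i0 + s - i0)"
  proof (rule sum.remove[THEN trans])
    show "finite {..i0 + s}" by simp
    show "i0 \<in> {..i0 + s}" by simp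
    have "(\<Sum>i\<in>{..i0 + s} - {i0}. coeff P i * coeff R (i0 + s - i)) = 0"
    proof (rule sum.neutral, rule ballI)
      fix i assume i: "i \<in> {..i0 + s} - {i0}"
      show "coeff P i * coeff R (i0 + s - i) = 0"
      proof (cases "i < i0")
        case True then show ?thesis using below by simp
      next
        case False
        then have "i0 + s - i < s" using i by auto
        then show ?thesis using s by simp
      qed
    qed
    then show "coeff P i0 * coeff R (i0 + s - i0) + (\<Sum>i\<in>{..i0 + s} - {i0}. coeff P i * coeff R (i0 + s - i)) = coeff P i0 * coeff R (i0 + s - i0)"
      by simp
  qed
  finally show "coeff (P * R) (i0 + s) \<noteq> 0" using Pi0 Rs by simp
qed

theorem lemma3p9:
  fixes S :: "int set" and n u \<nu> :: nat and P R :: "complex poly"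
  assumes "finite S"
    and "P \<in> polys_coeffs_in (2*n) (of_int ` S)"
    and "degree R \<le> u" and "R \<noteq> 0"
    and "NC (P * R) \<le> \<nu>"
  shows "let v = nat \<lfloor>16 * real u * ln (ln (real u + 3))\<rfloor>; k = dlcm v;
             H = monom 1 k - 1 :: complex poly
         in NC (P * H) \<le> (\<nu> + 1) * (k + card S ^ (u + 1) + 3 * (u + 1) + 2)"
proof -
  note fS = assms(1) and PS = assms(2) and Ru = assms(3) and R0 = assms(4) and Fnu = assms(5)
  define v where "v = nat \<lfloor>16 * real u * ln (ln (real u + 3))\<rfloor>"
  define k where "k = dlcm v"
  define H :: "complex poly" where "H = monom 1 k - 1"
  have uv: "2 * u \<le> v" unfolding v_def by (rule v_ge)
  have degP: "degree P \<le> 2*n" and cP: "\<And>j. j \<le> 2*n \<Longrightarrow> coeff P j \<in> of_int ` S"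
    using PS by (auto simp: polys_coeffs_in_def)
  have main: "NC (P * H) \<le> (\<nu> + 1) * (k + card S ^ (u + 1) + 3 * (u + 1) + 2)"
  proof (cases "P = 0")
    case True then show ?thesis by (simp add: NC_def)
  next
    case P0: False
    have Sne: "S \<noteq> {}" using cP[of 0] by auto
    have cS: "card S \<ge> 1" using Sne fS by (simp add: Suc_le_eq card_gt_0_iff)
    define F where "F = P * R"
    define J where "J = {j. coeff F j \<noteq> 0}"
    have finJ: "finite J" unfolding J_def
      by (rule finite_subset[of _ "{..degree F}"]) (auto intro: le_degree)
    have cardJ: "card J \<le> \<nu>" using Fnu by (simp add: NC_def J_def F_def)
    define d where "d = degree R"
    define s where "s = (LEAST i. coeff R i \<noteq> 0)"
    have Rd: "coeff R d \<noteq> 0" using R0 by (simp add: d_def)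
    have Rs: "coeff R s \<noteq> 0" unfolding s_def by (rule LeastI[of _ d]) (rule Rd)
    have sd: "s \<le> d" unfolding s_def by (rule Least_le) (rule Rd)
    have below_s: "\<And>i. i < s \<Longrightarrow> coeff R i = 0" unfolding s_def using not_less_Least by blast
    define e where "e = d - s"
    have eu: "e \<le> u" using Ru by (simp add: e_def d_def)
    define c where "c l = coeff R (s + l)" for l
    have c0: "c 0 \<noteq> 0" using Rs by (simp add: c_def)
    have ce: "c e \<noteq> 0" using Rd sd by (simp add: c_def e_def)
    define Nc where "Nc = card S ^ e"
    define B where "B = k + Nc + e"
    define Bad where "Bad = (\<Union>a\<in>J. {a - u..a + B})"
    have coeffPH: "coeff (P * H) j = (if k \<le> j then coeff P (j - k) else 0) - coeff P j" for j
    proof -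
      have "P * H = monom 1 k * P - P" by (simp add: H_def algebra_simps)
      then show ?thesis by (simp add: coeff_monom_mult)
    qed
    have sub: "{j. coeff (P * H) j \<noteq> 0} \<subseteq> Bad"
    proof
      fix j assume jnz: "j \<in> {j. coeff (P * H) j \<noteq> 0}"
      show "j \<in> Bad"
      proof (rule ccontr)
        assume jB: "j \<notin> Bad"
        have alt: "j + u < a \<or> a + B < j" if aJ: "a \<in> J" for a
        proof -
          have "j \<notin> {a - u..a + B}" using jB aJ unfolding Bad_def by blast
          then show ?thesis by auto
        qed
        have "coeff (P * H) j = 0"
        proof (cases "\<forall>a\<in>J. j + u < a")
          case True
          define i0 where "i0 = (LEAST i. coeff P i \<noteq> 0)"
          have "coeff F (i0 + s) \<noteq> 0" unfolding F_def i0_def by (rule lowest_coeff(1)[OF P0 Rs below_s])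
          then have "i0 + s \<in> J" by (simp add: J_def)
          then have "j + u < i0 + s" using True by blast
          then have ji: "j < i0" using sd Ru unfolding d_def by linarith
          have low: "\<And>i. i < i0 \<Longrightarrow> coeff P i = 0" unfolding i0_def by (rule lowest_coeff(2)[OF P0 Rs below_s])
          have "coeff P j = 0" using low ji by blast
          moreover have "coeff P (j - k) = 0" using ji by (intro low) linarith
          ultimately have "coeff P j = 0" "coeff P (j - k) = 0" by blast+
          then show ?thesis by (simp add: coeffPH)
        next
          case notall1: False
          show ?thesis
          proof (cases "\<forall>a\<in>J. a + B < j")
            case True
            have "coeff F (degree P + d) \<noteq> 0" using P0 R0 by (simp add: F_def d_def coeff_mult_degree_sum)
            then have "degree P + d \<in> J" by (simp add: J_def)
            then have "degree P + d + B < j" using True by blast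
            then have "degree P < j - k" "degree P < j" by (auto simp: B_def)
            then have "coeff P j = 0" "coeff P (j - k) = 0" by (auto intro: coeff_eq_0)
            then show ?thesis by (simp add: coeffPH)
          next
            case notall2: False
            obtain a where aJ: "a \<in> J" and aB: "a + B < j" using notall1 alt by blast
            obtain b where bJ: "b \<in> J" and bj: "j + u < b" using notall2 alt by blast
            have jk: "k \<le> j" "B \<le> j" using aB by (auto simp: B_def)
            define L0 where "L0 = j - B"
            have "b \<le> degree F" using bJ by (auto simp: J_def intro: le_degree)
            also have "degree F \<le> degree P + degree R" unfolding F_def by (rule degree_mult_le)
            finally have j2n: "j \<le> 2 * n" using bj degP Ru by linarith
            define y where "y i = (SOME z. z \<in> S \<and> of_int z = coeff P i)" for i
            have yprop: "y i \<in> S \<and> of_int (y i) = coeff P i" if "i \<le> 2 * n" for i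
            proof -
              have "\<exists>z. z \<in> S \<and> of_int z = coeff P i" using cP[OF that] by auto
              then show ?thesis unfolding y_def by (rule someI_ex)
            qed
            have recy: "(\<Sum>l\<le>e. c l * of_int (y (t + e - l))) = 0" if t: "L0 \<le> t" "t + e \<le> j" for t
            proof -
              have "(\<Sum>l\<le>e. c l * of_int (y (t + e - l))) = (\<Sum>l\<le>degree R - s. coeff R (s + l) * coeff P (t + d - s - l))"
              proof (intro sum.cong)
                show "{..e} = {..degree R - s}" by (simp add: e_def d_def)
              next
                fix l assume l: "l \<in> {..degree R - s}"
                have "t + d - s - l = t + e - l" using sd by (simp add: e_def)
                moreover have "t + e - l \<le> 2 * n" using t j2n by linarith
                ultimately show "c l * of_int (y (t + e - l)) = coeff R (s + l) * coeff P (t + d - s - l)"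
                  using yprop by (simp add: c_def)
              qed
              also have "\<dots> = coeff F (t + d)" unfolding F_def
                by (rule F_expand[symmetric, OF below_s]) (use sd in \<open>simp_all add: d_def\<close>)
              also have "\<dots> = 0"
              proof -
                have "t + d \<notin> J"
                proof
                  assume "t + d \<in> J"
                  from alt[OF this] show False using t sd Ru by (auto simp: L0_def e_def d_def)
                qed
                then show ?thesis by (simp add: J_def)
              qed
              finally show ?thesis .
            qed
            define D where "D = {L0..L0 + Nc}"
            define g where "g a = map y [a..<a + e]" for a
            have top: "L0 + Nc + e = j - k" using jk by (simp add: L0_def B_def)
            have gsub: "g ` D \<subseteq> {xs. set xs \<subseteq> S \<and> length xs = e}"
            proof
              fix xs assume "xs \<in> g ` D"
              then obtain a where a: "a \<in> D" "xs = g a" by blast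
              have "y i \<in> S" if "i \<in> {a..<a + e}" for i
                using yprop[of i] that a(1) top jk j2n by (auto simp: D_def)
              then show "xs \<in> {xs. set xs \<subseteq> S \<and> length xs = e}" using a by (auto simp: g_def)
            qed
            have cl: "card {xs. set xs \<subseteq> S \<and> length xs = e} = Nc"
              using card_lists_length_eq[OF fS] by (simp add: Nc_def)
            have "\<not> inj_on g D"
            proof
              assume "inj_on g D"
              then have "card D = card (g ` D)" by (simp add: card_image)
              also have "\<dots> \<le> Nc" using card_mono[OF _ gsub] cl by (simp add: finite_lists_length_eq fS)
              finally show False by (simp add: D_def)
            qed
            then obtain a1 a2 where a12: "a1 \<in> D" "a2 \<in> D" "a1 < a2" "g a1 = g a2"
              unfolding inj_on_def by (metis linorder_neqE_nat)
            have win: "y (a1 + (a2 - a1) + i) = y (a1 + i)" if "i < e" for i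
            proof -
              have "g a1 ! i = g a2 ! i" using a12 by simp
              then show ?thesis using that a12(3) by (simp add: g_def)
            qed
            have "y (j - k + dlcm v) = y (j - k)"
              by (rule region_core[OF c0 ce eu uv recy win])
                 (use a12 top jk in \<open>auto simp: D_def k_def\<close>)
            then have "y j = y (j - k)" using jk by (simp add: k_def)
            then have "coeff P j = coeff P (j - k)" using yprop[OF j2n] yprop[of "j - k"] j2n by auto
            then show ?thesis using jk by (simp add: coeffPH)
          qed
        qed
        then show False using jnz by simp
      qed
    qed
    have finBad: "finite Bad" using finJ by (simp add: Bad_def)
    have "card Bad \<le> (\<Sum>a\<in>J. card {a - u..a + B})" unfolding Bad_def by (rule card_UN_le[OF finJ])
    also have "\<dots> \<le> (\<Sum>a\<in>J. B + u + 1)" by (intro sum_mono) simp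
    also have "\<dots> = card J * (B + u + 1)" by simp
    finally have cB: "card Bad \<le> card J * (B + u + 1)" .
    have "NC (P * H) \<le> card Bad" unfolding NC_def by (rule card_mono[OF finBad sub])
    also have "\<dots> \<le> \<nu> * (B + u + 1)" using cB cardJ by (meson le_trans mult_le_mono1)
    also have "\<dots> \<le> (\<nu> + 1) * (k + card S ^ (u + 1) + 3 * (u + 1) + 2)"
    proof -
      have "Nc \<le> card S ^ (u + 1)" unfolding Nc_def by (rule power_increasing) (use eu cS in auto)
      then have "B + u + 1 \<le> k + card S ^ (u + 1) + 3 * (u + 1) + 2" using eu by (simp add: B_def)
      then show ?thesis by (intro mult_mono) auto
    qed
    finally show ?thesis .
  qed
  show ?thesis unfolding Let_def using main by (simp add: H_def k_def v_def)
qed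

end
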